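(* For an even $i$, 2Merge requires \[ \lceil\lg(i-1)\rceil + 1 - \frac{2}{p_i} + \frac{1}{3p_i^2} + O(1/i) \] comparisons on average at Step~4.
   Context: $\lg=\log_2$, $p_x = x/2^{\lceil \lg x\rceil}$. RHBS$(A,T)$, $T=(t_1,\dots,t_m)$ sorted: if $m\le 3\cdot 2^{\lceil\lg(m+1)\rceil-2}-1$ let $d=2^{\lceil\lg(m+1)\rceil-2}$, else $d=m-2^{\lceil\lg(m+1)\rceil-1}+1$; compare $A$ with $t_d$ and recurse on the left or right part. 2Merge$(A,B,T)$ with $T=(t_1,\dots,t_{i-2})$ sorted, $i$ even, $i\ge4$: Step 1 compare and swap so $A<B$; Steps 2–3 locate and insert $A$ (comparing $A$ with $t_{\lceil(1-2^{-r/2})i\rceil}$ for $r=1,2,\dots$ and then RHBS in the identified interval); suppose $A$ falls between $t_{\ell}$ and $t_{\ell+1}$. Step 4: insert $B$ into $(t_{\ell+1},\dots,t_{i-2})$ by RHBS. The two inserted elements occupy uniformly random distinct positions among the $i$ positions; given $A<B$, $\mathbf{Pr}[t_{\ell-1}<A<t_\ell]=(i-\ell)/\binom{i}{2}$, and $B$ is uniformly distributed over the positions to the right of $A$. *)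

theory Defs
  imports Complex_Main
begin

definition lg :: "real \<Rightarrow> real" where "lg x = log 2 x"

definition p_ratio :: "nat \<Rightarrow> real" where
  "p_ratio x = real x / 2 powr (of_int \<lceil>lg (real x)\<rceil>)"

text \<open>Split index d of RHBS on a sorted list of length m (m \<ge> 1), with
  K = ceil (lg (m+1)):  if m \<le> 3 * 2^(K-2) - 1 then d = 2^(K-2) else
  d = m - 2^(K-1) + 1.  (Condition written as 4(m+1) \<le> 3*2^K, which is the
  same inequality and also handles K = 1 where 2^(K-2) = 1/2.)\<close>
definition rhbs_K :: "nat \<Rightarrow> nat" where
  "rhbs_K m = nat \<lceil>lg (real (m + 1))\<rceil>"

definition rhbs_d :: "nat \<Rightarrow> nat" where
  "rhbs_d m = (if 4 * (m + 1) \<le> 3 * 2 ^ rhbs_K m then 2 ^ rhbs_K m div 4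
               else m + 1 - 2 ^ rhbs_K m div 2)"

lemma rhbs_d_bounds:
  assumes "m \<ge> 1" shows "1 \<le> rhbs_d m \<and> rhbs_d m \<le> m"
proof -
  define K where "K = rhbs_K m"
  have pos: "real (m+1) > 0" by simp
  have le: "real (m+1) \<le> 2 powr real K"
  proof -
    have "lg (real (m+1)) \<le> real K" unfolding K_def rhbs_K_def by linarith
    hence "2 powr lg (real (m+1)) \<le> 2 powr real K" by simp
    thus ?thesis using pos by (simp add: lg_def)
  qed
  have lt: "2 powr (real K - 1) < real (m+1)"
  proof -
    have "real K - 1 < lg (real (m+1))"
    proof -
      have "lg (real (m+1)) \<ge> 1" using assms by (simp add: lg_def)
      hence "real K = of_int \<lceil>lg (real (m+1))\<rceil>"
        unfolding K_def rhbs_K_def by simp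
      thus ?thesis by linarith
    qed
    hence "2 powr (real K - 1) < 2 powr lg (real (m+1))" by simp
    thus ?thesis using pos by (simp add: lg_def)
  qed
  have le': "m + 1 \<le> 2 ^ K"
  proof -
    have "real (m+1) \<le> real (2 ^ K)" using le by (simp add: powr_realpow)
    thus ?thesis by (simp only: of_nat_le_iff)
  qed
  have K1: "K \<ge> 1"
  proof (rule ccontr)
    assume "\<not> K \<ge> 1" hence "K = 0" by simp
    thus False using le' assms by simp
  qed
  have lt': "2 ^ (K - 1) < m + 1"
  proof -
    have "2 powr (real K - 1) = 2 ^ (K - 1)" using K1
      by (simp add: powr_realpow [symmetric] of_nat_diff)
    hence "real (2 ^ (K - 1)) < real (m + 1)" using lt by simp
    thus ?thesis by (simp only: of_nat_less_iff)
  qed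
  have h: "2 ^ K div 2 = (2::nat) ^ (K - 1)"
  proof -
    obtain j where "K = Suc j" using K1 by (cases K) auto
    thus ?thesis by simp
  qed
  show ?thesis
  proof (cases "4 * (m + 1) \<le> 3 * 2 ^ K")
    case True
    have K2: "K \<ge> 2"
    proof (rule ccontr)
      assume "\<not> K \<ge> 2" hence "K = 1" using K1 by simp
      thus False using True assms by simp
    qed
    have "2 ^ K div 4 = (2::nat) ^ (K - 2)"
    proof -
      obtain j where "K = Suc (Suc j)" using K2 by (metis add_2_eq_Suc le_Suc_ex)
      thus ?thesis by simp
    qed
    moreover have "(2::nat) ^ (K - 2) \<le> 2 ^ (K - 1)" by simp
    moreover have "(1::nat) \<le> 2 ^ (K - 2)" by simp
    ultimately have "1 \<le> (2::nat) ^ K div 4 \<and> 2 ^ K div 4 \<le> m" using lt' by linarith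
    thus ?thesis using True unfolding rhbs_d_def K_def[symmetric] by simp
  next
    case False
    have "(1::nat) \<le> 2 ^ (K - 1)" by simp
    hence "1 \<le> m + 1 - (2::nat) ^ K div 2 \<and> m + 1 - 2 ^ K div 2 \<le> m" using lt' h by linarith
    thus ?thesis using False unfolding rhbs_d_def K_def[symmetric] by simp
  qed
qed

text \<open>Number of comparisons RHBS makes to insert an element into a sorted list
  of length m, when exactly k list elements are smaller than it (k \<le> m):
  compare with t_d; if the element is smaller, recurse on t_1..t_(d-1),
  otherwise on t_(d+1)..t_m.\<close>
function rhbs_cost :: "nat \<Rightarrow> nat \<Rightarrow> nat" where
  "rhbs_cost m k = (if m = 0 then 0 else
     1 + (if k < rhbs_d m then rhbs_cost (rhbs_d m - 1) k
          else rhbs_cost (m - rhbs_d m) (k - rhbs_d m)))"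
  by auto
termination
proof (relation "measure fst")
  show "wf (measure fst)" by simp
next
  fix m k :: nat
  assume "m \<noteq> 0"
  hence b: "1 \<le> rhbs_d m" "rhbs_d m \<le> m" using rhbs_d_bounds[of m] by auto
  show "((rhbs_d m - 1, k), m, k) \<in> measure fst" using b by simp
  show "((m - rhbs_d m, k - rhbs_d m), m, k) \<in> measure fst" using b by simp
qed

declare rhbs_cost.simps [simp del]

text \<open>Average number of comparisons of Step 4 of 2Merge with i - 2 sorted
  elements: the final positions a < b (in 1..i) of A and B are a uniformly
  random pair; B is inserted by RHBS into t_a, ..., t_(i-2) (i - 1 - a
  elements), of which exactly b - a - 1 are smaller than B.\<close>
definition step4_avg :: "nat \<Rightarrow> real" where
  "step4_avg i = (\<Sum>a\<in>{1..i}. \<Sum>b\<in>{a<..i}. real (rhbs_cost (i - 1 - a) (b - a - 1)))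
                 / real (i choose 2)"

end

theory Submission
  imports Defs
begin

lemma ceil_lg_eq:
  assumes "2 ^ k < n" "n \<le> (2::nat) ^ (k+1)"
  shows "\<lceil>lg (real n)\<rceil> = int k + 1"
proof -
  have n0: "real n > 0" using assms by simp
  have r2: "real n \<le> 2 ^ (k+1)" using assms(2)
    by (metis of_nat_le_iff of_nat_numeral of_nat_power)
  have r1: "2 ^ k < real n" using assms(1)
    by (metis of_nat_less_iff of_nat_numeral of_nat_power)
  have "lg (real n) \<le> lg (2 ^ (k+1))"
    unfolding lg_def using n0 r2 by (subst log_le_cancel_iff) auto
  hence a: "lg (real n) \<le> real k + 1" proof -
    have "log 2 ((2::real) ^ (k+1)) = real (k+1)" by (rule log_pow_cancel) auto
    thus ?thesis using \<open>lg (real n) \<le> lg (2 ^ (k+1))\<close> unfolding lg_def by simp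
  qed
  have "lg (2 ^ k) < lg (real n)"
    unfolding lg_def using n0 r1 by (subst log_less_cancel_iff) auto
  hence b: "real k < lg (real n)" unfolding lg_def by simp
  show ?thesis using a b by (intro ceiling_unique) auto
qed

lemma ceil_lg_1: "\<lceil>lg (real (1::nat))\<rceil> = 0" by (simp add: lg_def)

lemma rhbs_K_eq: "2 ^ k < m + 1 \<Longrightarrow> m + 1 \<le> (2::nat) ^ (k+1) \<Longrightarrow> rhbs_K m = k + 1"
  unfolding rhbs_K_def using ceil_lg_eq[of k "m+1"] by simp

lemma rhbs_K_0: "rhbs_K 0 = 0" unfolding rhbs_K_def by (simp add: lg_def)

definition tot :: "nat \<Rightarrow> nat" where "tot m = (\<Sum>k\<le>m. rhbs_cost m k)"

lemma tot_0: "tot 0 = 0" unfolding tot_def by (simp add: rhbs_cost.simps)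

lemma tot_split:
  assumes "m \<ge> 1"
  shows "tot m = (m + 1) + tot (rhbs_d m - 1) + tot (m - rhbs_d m)"
proof -
  define d where "d = rhbs_d m"
  have b: "1 \<le> d" "d \<le> m" using rhbs_d_bounds[OF assms] d_def by auto
  have "tot m = (\<Sum>k\<le>m. 1 + (if k < d then rhbs_cost (d - 1) k else rhbs_cost (m - d) (k - d)))"
    unfolding tot_def d_def using assms by (intro sum.cong refl) (subst rhbs_cost.simps, simp)
  also have "\<dots> = (m+1) + (\<Sum>k\<le>m. (if k < d then rhbs_cost (d - 1) k else rhbs_cost (m - d) (k - d)))"
    by (simp only: sum.distrib) simp
  also have "{..m} = {..<d} \<union> {d..m}" using b by auto
  also have "(\<Sum>k\<in>{..<d} \<union> {d..m}. (if k < d then rhbs_cost (d - 1) k else rhbs_cost (m - d) (k - d)))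
     = (\<Sum>k\<in>{..<d}. rhbs_cost (d - 1) k) + (\<Sum>k\<in>{d..m}. rhbs_cost (m - d) (k - d))"
    by (subst sum.union_disjoint) auto
  also have "(\<Sum>k\<in>{..<d}. rhbs_cost (d - 1) k) = tot (d - 1)"
    unfolding tot_def using b by (intro sum.cong) auto
  also have "(\<Sum>k\<in>{d..m}. rhbs_cost (m - d) (k - d)) = tot (m - d)"
  proof -
    have "{d..m} = {0+d..(m-d)+d}" using b by simp
    hence "(\<Sum>k\<in>{d..m}. rhbs_cost (m - d) (k - d)) = (\<Sum>k\<in>{0..m-d}. rhbs_cost (m - d) (k + d - d))"
      by (simp only: sum.shift_bounds_cl_nat_ivl)
    thus ?thesis unfolding tot_def by (simp add: atMost_atLeast0)
  qed
  finally show ?thesis unfolding d_def by simp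
qed

lemma tot_conv:
  assumes main: "tot (n - 1) + 2 ^ rhbs_K (n - 1) = n * (rhbs_K (n - 1) + 1)"
    and n: "n \<ge> 1" and j: "2 ^ j \<le> n" "n \<le> 2 ^ (j+1)"
  shows "tot (n - 1) + 2 ^ (j+1) = n * (j + 2)"
proof (cases "n = 2 ^ j")
  case True
  show ?thesis
  proof (cases j)
    case 0
    then show ?thesis using True main by (simp add: rhbs_K_0)
  next
    case (Suc j')
    have "rhbs_K (n - 1) = j' + 1"
      using True Suc by (intro rhbs_K_eq) auto
    then show ?thesis using main True Suc by (simp add: algebra_simps)
  qed
next
  case False
  have "rhbs_K (n - 1) = j + 1" using False j n by (intro rhbs_K_eq) auto
  then show ?thesis using main by simp
qed

lemma exists_log: "n \<ge> 1 \<Longrightarrow> \<exists>k. 2 ^ k \<le> n \<and> n < (2::nat) ^ (k+1)"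
proof (induction n rule: dec_induct)
  case base
  then show ?case by (intro exI[of _ 0]) auto
next
  case (step n)
  then obtain k where k: "2 ^ k \<le> n" "n < (2::nat) ^ (k+1)" by blast
  show ?case
  proof (cases "Suc n < 2 ^ (k+1)")
    case True then show ?thesis using k by (intro exI[of _ k]) auto
  next
    case False
    hence "Suc n = 2 ^ (k+1)" using k by simp
    then show ?thesis by (intro exI[of _ "k+1"]) auto
  qed
qed

lemma tot_main: "tot m + 2 ^ rhbs_K m = (m + 1) * (rhbs_K m + 1)"
proof (induction m rule: less_induct)
  case (less m)
  show ?case
  proof (cases "m = 0")
    case True then show ?thesis by (simp add: tot_0 rhbs_K_0)
  next
    case False
    hence m1: "m \<ge> 1" by simp
    obtain k where k: "2 ^ k \<le> m" "m < (2::nat) ^ (k+1)" using exists_log[OF m1] by blast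
    have K: "rhbs_K m = k + 1" using k by (intro rhbs_K_eq) auto
    have sp: "tot m = (m + 1) + tot (rhbs_d m - 1) + tot (m - rhbs_d m)" by (rule tot_split[OF m1])
    have db: "1 \<le> rhbs_d m" "rhbs_d m \<le> m" using rhbs_d_bounds[OF m1] by auto
    have IH: "\<And>n j. 1 \<le> n \<Longrightarrow> n \<le> m \<Longrightarrow> 2 ^ j \<le> n \<Longrightarrow> n \<le> 2 ^ (j+1) \<Longrightarrow>
       tot (n - 1) + 2 ^ (j+1) = n * (j + 2)"
    proof -
      fix n j :: nat assume a: "1 \<le> n" "n \<le> m" "2 ^ j \<le> n" "n \<le> 2 ^ (j+1)"
      have "tot (n-1) + 2 ^ rhbs_K (n-1) = (n - 1 + 1) * (rhbs_K (n-1) + 1)"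
        using less[of "n-1"] a by simp
      hence "tot (n-1) + 2 ^ rhbs_K (n-1) = n * (rhbs_K (n-1) + 1)" using a by simp
      thus "tot (n - 1) + 2 ^ (j+1) = n * (j + 2)" using tot_conv a by blast
    qed
    show ?thesis
    proof (cases k)
      case 0
      hence "m = 1" using k by simp
      moreover have "rhbs_d 1 = 1" unfolding rhbs_d_def using K \<open>m=1\<close> 0 by simp
      ultimately show ?thesis using sp K 0 by (simp add: tot_0)
    next
      case (Suc k')
      define x where "x = (2::nat) ^ k'"
      have x2: "(2::nat) ^ k = 2 * x" "(2::nat) ^ (k+1) = 4 * x" "(2::nat) ^ (k' + 1) = 2 * x"
        using Suc x_def by simp_all
      have x1: "x \<ge> 1" unfolding x_def by simp
      have mb: "2 * x \<le> m" "m < 4 * x" using k x2 by auto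
      show ?thesis
      proof (cases "4 * (m + 1) \<le> 3 * 2 ^ rhbs_K m")
        case True
        have d: "rhbs_d m = x" unfolding rhbs_d_def using True K x2 by simp
        have A: "tot (x - 1) + 2 * x = x * (k' + 2)"
          using IH[of x k'] x1 x2 mb by (simp add: x_def)
        have B: "tot ((m + 1 - x) - 1) + 2 * x = (m + 1 - x) * (k' + 2)"
          using IH[of "m + 1 - x" k'] x1 x2 mb True K by auto
        have "m - x = (m + 1 - x) - 1" using mb by simp
        hence "tot m + 4 * x + x * (k' + 2) + (m + 1 - x) * (k' + 2) = (m + 1) + x * (k' + 2) + (m + 1 - x) * (k' + 2) + (tot (x - 1) + 2 * x) + (tot ((m + 1 - x) - 1) + 2 * x)"
          using sp d by simp
        hence "tot m + 4 * x = (m + 1) + x * (k' + 2) + (m + 1 - x) * (k' + 2)"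
          using A B by linarith
        moreover have "x * (k' + 2) + (m + 1 - x) * (k' + 2) = (m + 1) * (k' + 2)"
          using mb by (simp add: add_mult_distrib[symmetric])
        ultimately have "tot m + 4 * x = (m + 1) + (m + 1) * (k' + 2)" by linarith
        thus ?thesis using K Suc x2 by (simp add: algebra_simps)
      next
        case False
        have d: "rhbs_d m = m + 1 - 2 * x" unfolding rhbs_d_def using False K x2 by simp
        have A: "tot ((m + 1 - 2 * x) - 1) + 2 * x = (m + 1 - 2 * x) * (k' + 2)"
          using IH[of "m + 1 - 2 * x" k'] x1 x2 mb False K by auto
        have B: "tot (2 * x - 1) + 2 * x = (2 * x) * (k' + 2)"
          using IH[of "2 * x" k'] x1 x2 mb by auto
        have "m - (m + 1 - 2 * x) = 2 * x - 1" using mb by simp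
        hence "tot m + 4 * x + (m + 1 - 2 * x) * (k' + 2) + (2 * x) * (k' + 2) = (m + 1) + (m + 1 - 2 * x) * (k' + 2) + (2 * x) * (k' + 2) + (tot ((m + 1 - 2 * x) - 1) + 2 * x) + (tot (2 * x - 1) + 2 * x)"
          using sp d by simp
        hence "tot m + 4 * x = (m + 1) + (m + 1 - 2 * x) * (k' + 2) + (2 * x) * (k' + 2)"
          using A B by linarith
        moreover have "(m + 1 - 2 * x) * (k' + 2) + (2 * x) * (k' + 2) = (m + 1) * (k' + 2)"
          using mb by (simp add: add_mult_distrib[symmetric])
        ultimately have "tot m + 4 * x = (m + 1) + (m + 1) * (k' + 2)" by linarith
        thus ?thesis using K Suc x2 by (simp add: algebra_simps)
      qed
    qed
  qed
qed

lemma tot_j: "1 \<le> n \<Longrightarrow> 2 ^ j \<le> n \<Longrightarrow> n \<le> 2 ^ (j+1) \<Longrightarrow> tot (n - 1) + 2 ^ (j+1) = n * (j + 2)"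
proof -
  assume a: "1 \<le> n" "2 ^ j \<le> n" "n \<le> 2 ^ (j+1)"
  have "tot (n-1) + 2 ^ rhbs_K (n-1) = (n - 1 + 1) * (rhbs_K (n-1) + 1)" by (rule tot_main)
  hence "tot (n-1) + 2 ^ rhbs_K (n-1) = n * (rhbs_K (n-1) + 1)" using a by simp
  thus ?thesis using tot_conv a by blast
qed

lemma alg1: "6 * s + 6 * (2 * X) * (2*X-2) = 3 * (R + 2) * (2*X-2) * ((2*X-2) + 1) + (2 * X - 1) * (2 * X - 2) \<Longrightarrow>
  t + 2 * X = ((2*X-2) + 1) * (R + 2) \<Longrightarrow>
  6 * (s + t) + 6 * (4 * X) * ((2*X-2) + 1) = 3 * (R + 1 + 2) * ((2*X-2) + 1) * ((2*X-2) + 1 + 1) + (4 * X - 1) * (4 * X - 2 :: int)"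
  by algebra

lemma alg2: "6 * s + 6 * P * n = 3 * (Q + 2) * n * (n + 1) + C \<Longrightarrow>
  t + P = (n + 1) * (Q + 2) \<Longrightarrow>
  6 * (s + t) + 6 * P * (n + 1) = 3 * (Q + 2) * (n + 1) * (n + 1 + 1) + (C::int)"
  by algebra

definition S :: "nat \<Rightarrow> nat" where "S N = (\<Sum>m<N. tot m)"

lemma S_formula:
  "2 ^ q \<le> N + 1 \<Longrightarrow> N + 1 \<le> 2 ^ (q+1) \<Longrightarrow>
   6 * int (S N) + 6 * 2 ^ (q+1) * int N = 3 * (int q + 2) * int N * (int N + 1) + (2 ^ (q+1) - 1) * (2 ^ (q+1) - 2)"
proof (induction N arbitrary: q)
  case 0
  have "q = 0"
  proof (rule ccontr)
    assume "q \<noteq> 0"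
    hence "(2::nat) ^ 1 \<le> 2 ^ q" by (intro power_increasing) auto
    thus False using 0 by simp
  qed
  then show ?case by (simp add: S_def)
next
  case (Suc N)
  have SS: "S (Suc N) = S N + tot N" unfolding S_def by simp
  have e1: "int (Suc N) = int N + 1" by simp
  have e2: "int (S (Suc N)) = int (S N) + int (tot N)" using SS by simp
  show ?case
  proof (cases "2 ^ q \<le> N + 1")
    case True
    have IH: "6 * int (S N) + 6 * 2 ^ (q+1) * int N = 3 * (int q + 2) * int N * (int N + 1) + (2 ^ (q+1) - 1) * (2 ^ (q+1) - 2)"
      using True Suc.prems by (intro Suc.IH) auto
    have T: "tot (N + 1 - 1) + 2 ^ (q+1) = (N + 1) * (q + 2)" using True Suc.prems by (intro tot_j) auto
    hence T0: "tot N + 2 ^ (q+1) = (N + 1) * (q + 2)" by simp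
    have T': "int (tot N) + 2 ^ (q+1) = (int N + 1) * (int q + 2)"
      using arg_cong[OF T0, of int] by (simp add: algebra_simps)
    show ?thesis unfolding e1 e2 by (rule alg2[OF IH T'])
  next
    case False
    hence eq: "N + 2 = 2 ^ q" using Suc.prems by simp
    then obtain r where r: "q = Suc r" by (cases q) auto
    define x where "x = (2::nat) ^ r"
    have x1: "x \<ge> 1" unfolding x_def by simp
    have Nx: "N + 2 = 2 * x" using eq r x_def by simp
    have IH: "6 * int (S N) + 6 * 2 ^ (r+1) * int N = 3 * (int r + 2) * int N * (int N + 1) + (2 ^ (r+1) - 1) * (2 ^ (r+1) - 2)"
      using Nx x1 x_def r by (intro Suc.IH) auto
    have T: "tot (N + 1 - 1) + 2 ^ (r+1) = (N + 1) * (r + 2)" using Nx x1 x_def by (intro tot_j) auto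
    hence T0: "tot N + 2 ^ (r+1) = (N + 1) * (r + 2)" by simp
    have T': "int (tot N) + 2 ^ (r+1) = (int N + 1) * (int r + 2)"
      using arg_cong[OF T0, of int] by (simp add: algebra_simps)
    have xi: "(2::int) ^ (r+1) = 2 * int x" "(2::int) ^ (q+1) = 4 * int x" using x_def r by simp_all
    have Ni: "int N = 2 * int x - 2" using Nx by simp
    have IH': "6 * int (S N) + 6 * (2 * int x) * (2 * int x - 2) = 3 * (int r + 2) * (2 * int x - 2) * ((2 * int x - 2) + 1) + (2 * int x - 1) * (2 * int x - 2)"
      using IH unfolding xi Ni .
    have T'': "int (tot N) + 2 * int x = ((2 * int x - 2) + 1) * (int r + 2)"
      using T' unfolding xi Ni .
    have Q: "int q = int r + 1" using r by simp
    show ?thesis unfolding e1 e2 Q xi Ni by (rule alg1[OF IH' T''])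
  qed
qed

lemma numer_eq:
  assumes "i \<ge> 1"
  shows "(\<Sum>a\<in>{1..i}. \<Sum>b\<in>{a<..i}. real (rhbs_cost (i - 1 - a) (b - a - 1))) = real (S (i - 1))"
proof -
  have inner: "(\<Sum>b\<in>{a<..i}. real (rhbs_cost (i - 1 - a) (b - a - 1))) = real (tot (i - 1 - a))"
    if "a < i" for a
  proof -
    have "{a<..i} = {0 + (a+1)..(i - 1 - a) + (a+1)}" using that by auto
    hence "(\<Sum>b\<in>{a<..i}. real (rhbs_cost (i - 1 - a) (b - a - 1)))
        = (\<Sum>k\<in>{0..i - 1 - a}. real (rhbs_cost (i - 1 - a) (k + (a+1) - a - 1)))"
      by (simp only: sum.shift_bounds_cl_nat_ivl)
    also have "\<dots> = real (tot (i - 1 - a))" unfolding tot_def by (simp add: atMost_atLeast0)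
    finally show ?thesis .
  qed
  have "{1..i} = {1..<i} \<union> {i}" using assms by auto
  hence "(\<Sum>a\<in>{1..i}. \<Sum>b\<in>{a<..i}. real (rhbs_cost (i - 1 - a) (b - a - 1)))
      = (\<Sum>a\<in>{1..<i}. \<Sum>b\<in>{a<..i}. real (rhbs_cost (i - 1 - a) (b - a - 1)))"
    by simp
  also have "\<dots> = (\<Sum>a\<in>{1..<i}. real (tot (i - 1 - a)))" by (intro sum.cong refl inner) auto
  also have "\<dots> = (\<Sum>m\<in>{..<i-1}. real (tot m))"
    by (rule sum.reindex_bij_witness[where i="\<lambda>m. i - 1 - m" and j="\<lambda>a. i - 1 - a"]) auto
  also have "\<dots> = real (S (i - 1))" unfolding S_def by simp
  finally show ?thesis .
qed

lemma step4_avg_eq: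
  assumes "i \<ge> 2"
  shows "step4_avg i = 2 * real (S (i - 1)) / (real i * (real i - 1))"
proof -
  have "real (i choose 2) = real i * (real i - 1) / 2"
  proof -
    have "even (i * (i - 1))" by (cases "even i") auto
    hence "real (i * (i - 1) div 2) = real (i * (i - 1)) / 2" by (simp add: real_of_nat_div)
    thus ?thesis using assms by (simp add: choose_two of_nat_diff)
  qed
  note c = this
  have e: "step4_avg i = real (S (i - 1)) / real (i choose 2)"
    unfolding step4_avg_def using numer_eq[of i] assms by simp
  show ?thesis by (simp only: e c) simp
qed

lemma final_bound:
  fixes I P Q Sv :: real
  assumes I4: "I \<ge> 4" and P1: "I \<le> P" and P2: "P \<le> 2 * I"
    and Sf: "6 * Sv + 6 * P * (I - 1) = 3 * (Q + 2) * (I - 1) * I + (P - 1) * (P - 2)"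
  shows "\<bar>2 * Sv / (I * (I - 1)) - (Q + 1 + 1 - 2 / (I / P) + 1 / (3 * (I / P)\<^sup>2))\<bar> \<le> 6 / I"
proof -
  have Ipos: "I > 0" "I - 1 > 0" using I4 by auto
  have Ppos: "P > 0" using P1 Ipos by linarith
  define num where "num = P * P - 3 * (P * I) + 2 * I"
  have diff: "2 * Sv / (I * (I - 1)) - (Q + 1 + 1 - 2 / (I / P) + 1 / (3 * (I / P)\<^sup>2))
      = num / (3 * (I * I) * (I - 1))"
  proof -
    have Sv: "Sv = (3 * (Q + 2) * (I - 1) * I + (P - 1) * (P - 2) - 6 * P * (I - 1)) / 6"
      using Sf by simp
    show ?thesis unfolding Sv num_def using Ipos Ppos
      by (simp add: field_simps power2_eq_square)
  qed
  have h1: "P * P \<le> 4 * (I * I)"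
  proof -
    have "P * P \<le> (2 * I) * (2 * I)" using P2 Ppos by (intro mult_mono) auto
    thus ?thesis by simp
  qed
  have h2: "0 \<le> P * I" "P * I \<le> 2 * (I * I)"
  proof -
    show "0 \<le> P * I" using Ppos Ipos by simp
    have "P * I \<le> (2 * I) * I" using P2 Ipos by (intro mult_right_mono) auto
    thus "P * I \<le> 2 * (I * I)" by simp
  qed
  have h3: "I \<le> I * I" using I4 by (simp add: mult_le_cancel_left1)
  have h0: "0 \<le> P * P" by simp
  have "num \<le> 12 * (I * I)" "- num \<le> 12 * (I * I)" unfolding num_def using h0 h1 h2 h3 Ipos by linarith+
  hence "\<bar>num\<bar> \<le> 12 * (I * I)" by (simp only: abs_le_iff)
  hence "\<bar>num\<bar> / (3 * (I * I) * (I - 1)) \<le> 12 * (I * I) / (3 * (I * I) * (I - 1))"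
    using Ipos by (intro divide_right_mono) auto
  also have "\<dots> = 4 / (I - 1)" using Ipos by (simp add: field_simps)
  also have "\<dots> \<le> 6 / I" using Ipos I4 by (simp add: field_simps)
  finally show ?thesis unfolding diff using Ipos by (simp add: abs_divide abs_mult)
qed

theorem lemma2:
  shows "\<exists>C::real. \<forall>i::nat. even i \<and> i \<ge> 4 \<longrightarrow>
    \<bar>step4_avg i - (of_int \<lceil>lg (real (i - 1))\<rceil> + 1 - 2 / p_ratio i
                     + 1 / (3 * (p_ratio i)\<^sup>2))\<bar> \<le> C / real i"
proof (intro exI[of _ 6] allI impI)
  fix i :: nat
  assume a: "even i \<and> i \<ge> 4"
  hence ev: "even i" and i4: "i \<ge> 4" by auto
  have "\<exists>k. 2 ^ k \<le> i - 1 \<and> i - 1 < (2::nat) ^ (k+1)" using i4 by (intro exists_log) simp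
  then obtain q where q: "2 ^ q \<le> i - 1" "i - 1 < (2::nat) ^ (q+1)" by blast
  have q1: "q \<ge> 1"
  proof (rule ccontr)
    assume "\<not> q \<ge> 1" hence "q = 0" by simp
    thus False using q i4 by simp
  qed
  have ne: "i - 1 \<noteq> 2 ^ q"
  proof
    assume h: "i - 1 = 2 ^ q"
    have e: "even ((2::nat) ^ q)" using q1 by simp
    have o: "odd (i - 1)" using ev i4 by simp
    show False using e o unfolding h by blast
  qed
  have c1: "\<lceil>lg (real (i - 1))\<rceil> = int q + 1" using q ne by (intro ceil_lg_eq) auto
  have c2: "\<lceil>lg (real i)\<rceil> = int q + 1" using q ne i4 by (intro ceil_lg_eq) auto
  define P where "P = (2::real) ^ (q+1)"
  have pr: "p_ratio i = real i / P"
  proof -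
    have "(2::real) powr (of_int (int q + 1)) = 2 ^ (q+1)"
    proof -
      have "real_of_int (int q + 1) = real (q + 1)" by simp
      thus ?thesis by (simp only: powr_realpow)
    qed
    thus ?thesis unfolding p_ratio_def c2 P_def by simp
  qed
  have Sf: "6 * int (S (i - 1)) + 6 * 2 ^ (q+1) * int (i - 1) = 3 * (int q + 2) * int (i - 1) * (int (i - 1) + 1) + (2 ^ (q+1) - 1) * (2 ^ (q+1) - 2)"
    using q i4 by (intro S_formula) auto
  have Sr: "6 * real (S (i - 1)) + 6 * P * (real i - 1) = 3 * (real q + 2) * (real i - 1) * real i + (P - 1) * (P - 2)"
  proof -
    have h: "real_of_int (6 * int (S (i - 1)) + 6 * 2 ^ (q+1) * int (i - 1)) = real_of_int (3 * (int q + 2) * int (i - 1) * (int (i - 1) + 1) + (2 ^ (q+1) - 1) * (2 ^ (q+1) - 2))"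
      using arg_cong[OF Sf, of real_of_int] .
    have r1: "real (i - 1) = real i - 1" using i4 by simp
    have h2: "6 * real (S (i - 1)) + 6 * 2 ^ (q+1) * real (i - 1) = 3 * (real q + 2) * real (i - 1) * (real (i - 1) + 1) + (2 ^ (q+1) - 1) * (2 ^ (q+1) - 2)"
      using h by (simp only: of_int_add of_int_mult of_int_diff of_int_power of_int_of_nat_eq of_int_numeral of_int_1)
    show ?thesis using h2 unfolding r1 P_def by simp
  qed
  have P1: "real i \<le> P"
  proof -
    have "i \<le> 2 ^ (q+1)" using q i4 by simp
    hence "real i \<le> real ((2::nat) ^ (q+1))" by (simp only: of_nat_le_iff)
    thus ?thesis unfolding P_def by simp
  qed
  have P2: "P \<le> 2 * real i"
  proof -
    have "2 ^ (q+1) \<le> 2 * i" using q i4 by simp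
    hence "real ((2::nat) ^ (q+1)) \<le> real (2 * i)" by (simp only: of_nat_le_iff)
    thus ?thesis unfolding P_def by simp
  qed
  have I4: "real i \<ge> 4" using i4 by simp
  have fb: "\<bar>2 * real (S (i - 1)) / (real i * (real i - 1)) - (real q + 1 + 1 - 2 / (real i / P) + 1 / (3 * (real i / P)\<^sup>2))\<bar> \<le> 6 / real i"
    by (rule final_bound[OF I4 P1 P2 Sr])
  show "\<bar>step4_avg i - (of_int \<lceil>lg (real (i - 1))\<rceil> + 1 - 2 / p_ratio i
                     + 1 / (3 * (p_ratio i)\<^sup>2))\<bar> \<le> 6 / real i"
  proof -
    have st: "step4_avg i = 2 * real (S (i - 1)) / (real i * (real i - 1))" using i4 by (intro step4_avg_eq) simp
    show ?thesis unfolding st c1 pr using fb by simp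
  qed
qed

end
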